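(* Let $m\ge2$, $q\ge2$ be integers, $A$ a primitive $m\times m$ matrix with entries in $\{0,1\}$, and $\Sigma_A=\{(x_k)_{k\ge1}\in\{0,\dots,m-1\}^{\mathbb N}:\ A(x_k,x_{k+1})=1 \ \forall k\}$. Let $(t_i)_{i=0}^{m-1}$ be the unique vector with $t_i>1$ and $t_i^q=\sum_j A(i,j)t_j$ for all $i$. Then the unique Borel probability measure $\mu$ on $\Sigma_A$ maximizing $s(\Sigma_A,\mu)$ is the Markov measure with initial probability vector $\mathbf{p}=\bigl(\sum_{i=0}^{m-1}t_i\bigr)^{-1}(t_0,\dots,t_{m-1})$ and transition probabilities $p_{ij}=t_j/t_i^q$ if $A(i,j)=1$ (and $p_{ij}=0$ otherwise).
   Context: A non-negative matrix is primitive if some power is strictly positive. For a closed $\Omega\subset\Sigma_m$ and Borel probability $\mu$ on $\Omega$: $[u]$ is the cylinder of sequences beginning with word $u$, $\alpha_k=\{\Omega\cap[u]:\ u\in\{0,\dots,m-1\}^k,\ \Omega\cap[u]\ne\emptyset\}$, $H_m^\mu(\alpha)=-\sum_{C\in\alpha}\mu(C)\log_m\mu(C)$, and $s(\Omega,\mu)=(q-1)^2\sum_{k\ge1}H_m^\mu(\alpha_k)/q^{k+1}$. *)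

theory Defs
  imports "HOL-Probability.Probability"
begin

text \<open>Sequences in the full shift are functions nat => nat (index k >= 0 corresponds
to the paper's index k+1); nat => nat carries the product topology (Function_Topology),
so borel is the Borel sigma-algebra of the shift space.\<close>

definition full_shift :: "nat \<Rightarrow> (nat \<Rightarrow> nat) set" where
  "full_shift m = {x. \<forall>k. x k < m}"

definition SigmaA :: "nat \<Rightarrow> (nat \<Rightarrow> nat \<Rightarrow> nat) \<Rightarrow> (nat \<Rightarrow> nat) set" where
  "SigmaA m A = {x. (\<forall>k. x k < m) \<and> (\<forall>k. A (x k) (x (Suc k)) = 1)}"

fun matpow :: "nat \<Rightarrow> (nat \<Rightarrow> nat \<Rightarrow> nat) \<Rightarrow> nat \<Rightarrow> nat \<Rightarrow> nat \<Rightarrow> nat" where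
  "matpow m A 0 = (\<lambda>i j. if i = j then 1 else 0)"
| "matpow m A (Suc n) = (\<lambda>i j. \<Sum>k<m. matpow m A n i k * A k j)"

definition primitive :: "nat \<Rightarrow> (nat \<Rightarrow> nat \<Rightarrow> nat) \<Rightarrow> bool" where
  "primitive m A \<longleftrightarrow> (\<exists>n. \<forall>i<m. \<forall>j<m. matpow m A n i j > 0)"

definition cyl :: "nat list \<Rightarrow> (nat \<Rightarrow> nat) set" where
  "cyl u = {x. \<forall>i<length u. x i = u ! i}"

definition alpha :: "nat \<Rightarrow> (nat \<Rightarrow> nat) set \<Rightarrow> nat \<Rightarrow> (nat \<Rightarrow> nat) set set" where
  "alpha m \<Omega> k = {\<Omega> \<inter> cyl u | u. length u = k \<and> set u \<subseteq> {..<m} \<and> \<Omega> \<inter> cyl u \<noteq> {}}"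

text \<open>Entropy with base-m logarithm; note 0 * log m 0 = 0 in Isabelle (ln 0 = 0),
matching the convention 0 log 0 = 0.\<close>
definition Hm :: "nat \<Rightarrow> (nat \<Rightarrow> nat) measure \<Rightarrow> (nat \<Rightarrow> nat) set set \<Rightarrow> real" where
  "Hm m \<mu> \<alpha> = - (\<Sum>C\<in>\<alpha>. measure \<mu> C * log (real m) (measure \<mu> C))"

definition s_dim :: "nat \<Rightarrow> nat \<Rightarrow> (nat \<Rightarrow> nat) set \<Rightarrow> (nat \<Rightarrow> nat) measure \<Rightarrow> real" where
  "s_dim m q \<Omega> \<mu> = (real q - 1)^2 * (\<Sum>k. Hm m \<mu> (alpha m \<Omega> (Suc k)) / real q ^ (Suc k + 1))"

definition borel_prob_on :: "(nat \<Rightarrow> nat) set \<Rightarrow> (nat \<Rightarrow> nat) measure \<Rightarrow> bool" where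
  "borel_prob_on \<Omega> \<mu> \<longleftrightarrow> prob_space \<mu> \<and> sets \<mu> = sets (restrict_space borel \<Omega>)"

definition markov_measure :: "nat \<Rightarrow> (nat \<Rightarrow> nat) set \<Rightarrow> (nat \<Rightarrow> real) \<Rightarrow> (nat \<Rightarrow> nat \<Rightarrow> real)
    \<Rightarrow> (nat \<Rightarrow> nat) measure \<Rightarrow> bool" where
  "markov_measure m \<Omega> p P \<mu> \<longleftrightarrow> borel_prob_on \<Omega> \<mu> \<and>
     (\<forall>u. u \<noteq> [] \<longrightarrow> set u \<subseteq> {..<m} \<longrightarrow>
        measure \<mu> (\<Omega> \<inter> cyl u) = p (u ! 0) * (\<Prod>i<length u - 1. P (u ! i) (u ! Suc i)))"

end

theory Submission
  imports Defs
begin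


definition hh :: "real \<Rightarrow> real" where "hh x = - x * ln x"

lemma ln_strict: fixes x :: real assumes "x > 0" "x \<noteq> 1" shows "ln x < x - 1"
proof -
  have s: "sqrt x > 0" using assms by simp
  have "ln x = 2 * ln (sqrt x)" using assms by (simp add: ln_sqrt)
  also have "\<dots> \<le> 2 * (sqrt x - 1)" using ln_le_minus_one[OF s] by simp
  also have "\<dots> < x - 1"
  proof -
    have "sqrt x \<noteq> 1" using assms by auto
    hence "(sqrt x - 1)^2 > 0" by simp
    moreover have "(sqrt x)^2 = x" using assms by simp
    ultimately show ?thesis by (simp add: power2_eq_square algebra_simps)
  qed
  finally show ?thesis .
qed

lemma gibbs_term:
  fixes F Wt w g :: real
  assumes "Wt > 0" "w \<ge> 0" "g \<ge> 0" "F \<ge> g" "w = 0 \<Longrightarrow> g = 0"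
  defines "e \<equiv> F*w/Wt - g - g*ln F - g*ln w + g*ln Wt - hh g"
  shows "e \<ge> 0" "e = 0 \<longleftrightarrow> g = F*w/Wt"
proof -
  have "e \<ge> 0 \<and> (e = 0 \<longleftrightarrow> g = F*w/Wt)"
  proof (cases "g = 0")
    case True
    then have "e = F*w/Wt" unfolding e_def hh_def by simp
    moreover have "F*w/Wt \<ge> 0" using assms by simp
    ultimately show ?thesis using True by auto
  next
    case False
    hence g: "g > 0" using assms by simp
    hence F: "F > 0" and w: "w > 0" using assms by (auto simp: less_le)
    define x where "x = F*w/(Wt*g)"
    have x: "x > 0" unfolding x_def using F w g assms by simp
    have lnx: "ln x = ln F + ln w - ln Wt - ln g" unfolding x_def using F w g assms
      by (simp add: ln_div ln_mult)
    have ee: "e = g * (x - 1 - ln x)" unfolding e_def hh_def lnx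
      using g by (simp add: x_def algebra_simps)
    have "x - 1 - ln x \<ge> 0" using ln_le_minus_one[OF x] by simp
    moreover have "e = 0 \<longleftrightarrow> x = 1"
    proof
      assume "e = 0"
      hence "x - 1 - ln x = 0" using ee g by simp
      thus "x = 1" using ln_strict[OF x] by fastforce
    qed (simp add: ee)
    moreover have "x = 1 \<longleftrightarrow> g = F*w/Wt" unfolding x_def using g assms
      by (auto simp: field_simps)
    ultimately show ?thesis using ee g by simp
  qed
  thus "e \<ge> 0" "e = 0 \<longleftrightarrow> g = F*w/Wt" by auto
qed



lemma lin_exp: "real n + 1 \<le> 2 * (3/2::real)^n"
proof (induction n)
  case (Suc n)
  show ?case
  proof (cases n)
    case 0 then show ?thesis by simp
  next
    case (Suc k)
    have "real (Suc n) + 1 \<le> (3/2) * (real n + 1)" using Suc by simp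
    also have "\<dots> \<le> (3/2) * (2 * (3/2)^n)" using Suc.IH by simp
    finally show ?thesis by simp
  qed
qed simp

lemma summ_lin:
  fixes x :: "nat \<Rightarrow> real" and Q K :: real
  assumes Q: "Q \<ge> 2" and b: "\<And>n. \<bar>x n\<bar> \<le> K * (real n + 1)"
  shows "summable (\<lambda>n. x n * (1/Q)^n)"
proof (rule summable_comparison_test[where g="\<lambda>n. 2 * \<bar>K\<bar> * (3/4)^n"])
  show "summable (\<lambda>n. 2 * \<bar>K\<bar> * (3/4::real)^n)"
    by (intro summable_mult summable_geometric) simp
  show "\<exists>N. \<forall>n\<ge>N. norm (x n * (1/Q)^n) \<le> 2 * \<bar>K\<bar> * (3/4)^n"
  proof (intro exI allI impI)
    fix n :: nat
    have r: "0 \<le> (1/Q)^n" "(1/Q)^n \<le> (1/2)^n" using Q by (auto intro!: power_mono)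
    have "norm (x n * (1/Q)^n) = \<bar>x n\<bar> * (1/Q)^n" using Q by (simp add: abs_mult)
    also have "\<dots> \<le> (\<bar>K\<bar> * (real n + 1)) * (1/Q)^n"
    proof -
      have "K * (real n + 1) \<le> \<bar>K\<bar> * (real n + 1)" by (intro mult_right_mono) auto
      hence "\<bar>x n\<bar> \<le> \<bar>K\<bar> * (real n + 1)" using b[of n] by linarith
      thus ?thesis using r by (intro mult_right_mono) auto
    qed
    also have "\<dots> \<le> (\<bar>K\<bar> * (2 * (3/2)^n)) * (1/2)^n"
      using lin_exp[of n] r by (intro mult_mono mult_left_mono) auto
    also have "\<dots> = 2 * \<bar>K\<bar> * (3/4)^n" by (simp add: power_mult_distrib[symmetric])
    finally show "norm (x n * (1/Q)^n) \<le> 2 * \<bar>K\<bar> * (3/4)^n" .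
  qed
qed

lemma series_main:
  fixes a b d :: "nat \<Rightarrow> real" and Q K :: real
  assumes Q: "Q \<ge> 2" and a0: "a 0 = 0"
    and rec: "\<And>n. a (Suc n) = a n + Q * b n - b (Suc n) - d n"
    and ba: "\<And>n. \<bar>a n\<bar> \<le> K * (real n + 1)"
    and bb: "\<And>n. \<bar>b n\<bar> \<le> K"
    and bd: "\<And>n. \<bar>d n\<bar> \<le> K * (real n + 1)"
  shows "(\<lambda>k. a (Suc k) / Q ^ (Suc k + 1)) sums ((b 0 - (\<Sum>n. d n / Q ^ Suc n)) / (Q - 1))"
    and "summable (\<lambda>n. d n / Q ^ Suc n)"
proof -
  define r where "r = 1 / Q"
  have r: "0 < r" "r < 1" using Q by (auto simp: r_def)
  have sa: "summable (\<lambda>n. a n * r^n)" unfolding r_def by (rule summ_lin[OF Q ba])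
  have sd0: "summable (\<lambda>n. d n * r^n)" unfolding r_def by (rule summ_lin[OF Q bd])
  define X where "X = (\<Sum>n. a n * r^n)"
  have aX: "(\<lambda>n. a n * r^n) sums X" using sa X_def by (simp add: summable_sums)
  have a1: "(\<lambda>n. a (Suc n) * r^(Suc n)) sums X"
    using aX by (subst sums_Suc_iff) (simp add: a0)
  have a2: "(\<lambda>n. a n * r^(Suc n)) sums (r * X)"
    using sums_mult[OF aX, of r] by (simp add: algebra_simps)
  have diff: "(\<lambda>n. a (Suc n) * r^(Suc n) - a n * r^(Suc n)) sums (X - r * X)"
    by (rule sums_diff[OF a1 a2])
  have gl: "(\<lambda>n. b n * r^n) \<longlonglongrightarrow> 0"
  proof (rule Lim_null_comparison[where g="\<lambda>n. \<bar>K\<bar> * r^n"])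
    show "\<forall>\<^sub>F n in sequentially. norm (b n * r^n) \<le> \<bar>K\<bar> * r^n"
    proof (intro always_eventually allI)
      fix n
      have "\<bar>b n\<bar> \<le> \<bar>K\<bar>" using bb[of n] by linarith
      thus "norm (b n * r^n) \<le> \<bar>K\<bar> * r^n" using r by (simp add: abs_mult mult_right_mono)
    qed
    show "(\<lambda>n. \<bar>K\<bar> * r^n) \<longlonglongrightarrow> 0"
      using r by (intro tendsto_mult_right_zero LIMSEQ_power_zero) auto
  qed
  have tel: "(\<lambda>n. b n * r^n - b (Suc n) * r^(Suc n)) sums (b 0 * r^0 - 0)"
    by (rule telescope_sums'[OF gl])
  have sd: "(\<lambda>n. d n * r^(Suc n)) sums (r * (\<Sum>n. d n * r^n))"
    using sums_mult[OF summable_sums[OF sd0], of r] by (simp add: algebra_simps)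
  have eq: "a (Suc n) * r^(Suc n) - a n * r^(Suc n) = (b n * r^n - b (Suc n) * r^(Suc n)) - d n * r^(Suc n)" for n
  proof -
    have "Q * r = 1" using Q by (simp add: r_def)
    hence "a (Suc n) * r^(Suc n) - a n * r^(Suc n) = (Q * b n - b (Suc n) - d n) * r^(Suc n)"
      by (simp add: rec algebra_simps)
    also have "\<dots> = (b n * (Q * r) * r^n - b (Suc n) * r^(Suc n)) - d n * r^(Suc n)"
      by (simp add: algebra_simps)
    finally show ?thesis using \<open>Q * r = 1\<close> by simp
  qed
  have dfun: "(\<lambda>n. d n / Q ^ Suc n) = (\<lambda>n. d n * r^(Suc n))"
    by (simp add: r_def power_one_over divide_inverse power_inverse)
  define D where "D = (\<Sum>n. d n / Q ^ Suc n)"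
  have dD: "(\<lambda>n. d n * r^(Suc n)) sums D"
  proof -
    have "(\<lambda>n. d n / Q ^ Suc n) = (\<lambda>n. d n * r^(Suc n))"
      by (simp add: r_def power_one_over divide_inverse power_inverse)
    moreover have "summable (\<lambda>n. d n * r^(Suc n))" using sd by (rule sums_summable)
    ultimately show ?thesis unfolding D_def by (simp add: summable_sums)
  qed
  have "(\<lambda>n. (b n * r^n - b (Suc n) * r^(Suc n)) - d n * r^(Suc n)) sums (b 0 - D)"
    using sums_diff[OF tel dD] by simp
  hence "(\<lambda>n. a (Suc n) * r^(Suc n) - a n * r^(Suc n)) sums (b 0 - D)" by (simp only: eq)
  hence XD: "X - r * X = b 0 - D" using diff sums_unique2 by blast
  have "(\<lambda>k. r * (a (Suc k) * r^(Suc k))) sums (r * X)" by (rule sums_mult[OF a1])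
  moreover have "(\<lambda>k. r * (a (Suc k) * r^(Suc k))) = (\<lambda>k. a (Suc k) / Q ^ (Suc k + 1))"
    by (simp add: r_def power_one_over divide_inverse power_inverse algebra_simps)
  moreover have "r * X = (b 0 - D) / (Q - 1)"
  proof -
    have "X = (b 0 - D) / (1 - r)" using XD r by (simp add: field_simps)
    thus ?thesis using Q by (simp add: r_def field_simps)
  qed
  ultimately show "(\<lambda>k. a (Suc k) / Q ^ (Suc k + 1)) sums ((b 0 - (\<Sum>n. d n / Q ^ Suc n)) / (Q - 1))"
    by (simp add: D_def)
  show "summable (\<lambda>n. d n / Q ^ Suc n)" unfolding dfun using sd by (rule sums_summable)
qed



definition ee :: "real \<Rightarrow> real \<Rightarrow> real \<Rightarrow> real \<Rightarrow> real" where
  "ee F Wt w g = F*w/Wt - g - g*ln F - g*ln w + g*ln Wt - hh g"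

definition mkf :: "(nat \<Rightarrow> real) \<Rightarrow> (nat \<Rightarrow> nat \<Rightarrow> real) \<Rightarrow> nat list \<Rightarrow> real" where
  "mkf p P u = p (u ! 0) * (\<Prod>i<length u - 1. P (u ! i) (u ! Suc i))"

lemma mkf_snoc: assumes "u \<noteq> []" shows "mkf p P (u @ [j]) = mkf p P u * P (last u) j"
proof -
  obtain n where n: "length u = Suc n" using assms by (cases u) auto
  have l: "last u = u ! n" using assms n by (simp add: last_conv_nth)
  have "(\<Prod>i<length (u@[j]) - 1. P ((u@[j]) ! i) ((u@[j]) ! Suc i))
      = (\<Prod>i<Suc n. P ((u@[j]) ! i) ((u@[j]) ! Suc i))" using n by simp
  also have "\<dots> = (\<Prod>i<n. P ((u@[j]) ! i) ((u@[j]) ! Suc i)) * P ((u@[j]) ! n) ((u@[j]) ! Suc n)"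
    by simp
  also have "(\<Prod>i<n. P ((u@[j]) ! i) ((u@[j]) ! Suc i)) = (\<Prod>i<n. P (u ! i) (u ! Suc i))"
    using n by (intro prod.cong) (auto simp: nth_append)
  also have "P ((u@[j]) ! n) ((u@[j]) ! Suc n) = P (last u) j" using n l by (simp add: nth_append)
  finally show ?thesis unfolding mkf_def using n assms by (simp add: nth_append)
qed

locale mk =
  fixes m q :: nat and A :: "nat \<Rightarrow> nat \<Rightarrow> nat" and t :: "nat \<Rightarrow> real"
  assumes m2: "m \<ge> 2" and q2: "q \<ge> 2"
    and A01: "\<forall>i<m. \<forall>j<m. A i j \<in> {0, 1}"
    and tpos: "\<forall>i<m. t i > 1"
    and teq: "\<forall>i<m. t i ^ q = (\<Sum>j<m. real (A i j) * t j)"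
begin

definition WW :: "nat \<Rightarrow> nat list set" where "WW n = {u. length u = n \<and> set u \<subseteq> {..<m}}"
definition TT :: real where "TT = (\<Sum>i<m. t i)"
definition wt :: "nat list \<Rightarrow> nat \<Rightarrow> real" where
  "wt u j = (if u = [] then t j else real (A (last u) j) * t j)"
definition Wt :: "nat list \<Rightarrow> real" where "Wt u = (if u = [] then TT else t (last u) ^ q)"
definition cc :: "nat list \<Rightarrow> real" where "cc u = (if u = [] then ln TT / q else ln (t (last u)))"
definition pp :: "nat \<Rightarrow> real" where "pp i = t i / TT"
definition PP :: "nat \<Rightarrow> nat \<Rightarrow> real" where "PP i j = (if A i j = 1 then t j / t i ^ q else 0)"

definition goodf :: "(nat list \<Rightarrow> real) \<Rightarrow> bool" where
  "goodf f \<longleftrightarrow> f [] = 1 \<and> (\<forall>u. 0 \<le> f u) \<and> (\<forall>n. \<forall>u\<in>WW n. f u = (\<Sum>j<m. f (u @ [j]))) \<and>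
     (\<forall>n. \<forall>u\<in>WW n. \<forall>j<m. u \<noteq> [] \<longrightarrow> A (last u) j \<noteq> 1 \<longrightarrow> f (u @ [j]) = 0)"

definition aa where "aa f n = (\<Sum>u\<in>WW n. hh (f u))"
definition bb where "bb f n = (\<Sum>u\<in>WW n. f u * cc u)"
definition dd where "dd f n = aa f n + real q * bb f n - bb f (Suc n) - aa f (Suc n)"
definition del where "del f u = (\<Sum>j<m. ee (f u) (Wt u) (wt u j) (f (u @ [j])))"
definition DD where "DD f = (\<Sum>n. dd f n / real q ^ Suc n)"
definition rec where "rec f \<longleftrightarrow> (\<forall>n. \<forall>u\<in>WW n. \<forall>j<m. f (u @ [j]) = f u * wt u j / Wt u)"

lemma WW_0: "WW 0 = {[]}" by (auto simp: WW_def)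

lemma WW_Suc: "WW (Suc n) = (\<lambda>(u,j). u @ [j]) ` (WW n \<times> {..<m})"
proof (intro equalityI subsetI)
  fix v assume "v \<in> WW (Suc n)"
  then obtain u j where "v = u @ [j]" "length u = n" "set u \<subseteq> {..<m}" "j < m"
    unfolding WW_def by (cases v rule: rev_cases) auto
  thus "v \<in> (\<lambda>(u,j). u @ [j]) ` (WW n \<times> {..<m})" unfolding WW_def by force
qed (auto simp: WW_def)

lemma finite_WW: "finite (WW n)"
  by (induction n) (auto simp: WW_0 WW_Suc)

lemma sum_WW_Suc: "(\<Sum>v\<in>WW (Suc n). G v) = (\<Sum>u\<in>WW n. \<Sum>j<m. G (u @ [j]))"
proof -
  have inj: "inj_on (\<lambda>(u,j). u @ [j]) (WW n \<times> {..<m})" by (auto simp: inj_on_def)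
  have "(\<Sum>v\<in>WW (Suc n). G v) = (\<Sum>x\<in>WW n \<times> {..<m}. G ((\<lambda>(u,j). u @ [j]) x))"
    unfolding WW_Suc by (rule sum.reindex[OF inj, unfolded comp_def])
  also have "\<dots> = (\<Sum>u\<in>WW n. \<Sum>j<m. G (u @ [j]))"
    by (subst sum.cartesian_product) (simp add: split_beta)
  finally show ?thesis .
qed

lemma WW_snoc: "u \<in> WW n \<Longrightarrow> j < m \<Longrightarrow> u @ [j] \<in> WW (Suc n)"
  by (auto simp: WW_def)

lemma last_lt: "u \<in> WW n \<Longrightarrow> u \<noteq> [] \<Longrightarrow> last u < m"
  unfolding WW_def using last_in_set by blast

lemma t_pos: "i < m \<Longrightarrow> t i > 0" using tpos by force

lemma TT_gt1: "TT > 1"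
proof -
  have "t 0 \<le> TT" unfolding TT_def using m2 t_pos
    by (intro member_le_sum) (auto intro: less_imp_le)
  thus ?thesis using tpos m2 by force
qed

lemma A01': "i < m \<Longrightarrow> j < m \<Longrightarrow> A i j \<noteq> 1 \<Longrightarrow> A i j = 0" using A01 by force

lemma Wt_sum: "u \<in> WW n \<Longrightarrow> (\<Sum>j<m. wt u j) = Wt u"
  using teq last_lt[of u n] by (auto simp: wt_def Wt_def TT_def)

lemma Wt_pos: "u \<in> WW n \<Longrightarrow> Wt u > 0"
  using TT_gt1 t_pos last_lt[of u n] by (auto simp: Wt_def)

lemma ln_Wt: "u \<in> WW n \<Longrightarrow> ln (Wt u) = real q * cc u"
  using q2 last_lt[of u n] t_pos by (auto simp: Wt_def cc_def ln_realpow)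

lemma wt_nonneg: "u \<in> WW n \<Longrightarrow> j < m \<Longrightarrow> wt u j \<ge> 0"
  using t_pos[of j] by (auto simp: wt_def)

lemma goodfD:
  assumes "goodf f"
  shows "f [] = 1" "\<And>u. 0 \<le> f u" "\<And>u n. u \<in> WW n \<Longrightarrow> f u = (\<Sum>j<m. f (u @ [j]))"
    "\<And>u n j. u \<in> WW n \<Longrightarrow> j < m \<Longrightarrow> u \<noteq> [] \<Longrightarrow> A (last u) j \<noteq> 1 \<Longrightarrow> f (u @ [j]) = 0"
  using assms unfolding goodf_def by blast+

lemma wt_zero: "goodf f \<Longrightarrow> u \<in> WW n \<Longrightarrow> j < m \<Longrightarrow> wt u j = 0 \<Longrightarrow> f (u @ [j]) = 0"
  using t_pos[of j] goodfD(4)[of f u n j] by (auto simp: wt_def split: if_splits)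

lemma gw: assumes "goodf f" "u \<in> WW n" "j < m"
  shows "f (u @ [j]) * ln (wt u j) = f (u @ [j]) * cc (u @ [j])"
proof (cases "f (u @ [j]) = 0")
  case False
  show ?thesis
  proof (cases "u = []")
    case True thus ?thesis by (simp add: wt_def cc_def)
  next
    case nu: False
    have "A (last u) j = 1" using goodfD(4)[OF assms(1,2,3) nu] False by blast
    thus ?thesis using nu by (simp add: wt_def cc_def)
  qed
qed simp

lemma sumf_one: "goodf f \<Longrightarrow> (\<Sum>u\<in>WW n. f u) = 1"
proof (induction n)
  case 0 thus ?case by (simp add: WW_0 goodfD)
next
  case (Suc n)
  have "(\<Sum>u\<in>WW (Suc n). f u) = (\<Sum>u\<in>WW n. \<Sum>j<m. f (u @ [j]))" by (rule sum_WW_Suc)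
  also have "\<dots> = (\<Sum>u\<in>WW n. f u)" using goodfD(3)[OF Suc.prems] by (intro sum.cong) auto
  finally show ?case using Suc by simp
qed

lemma f_le1: "goodf f \<Longrightarrow> u \<in> WW n \<Longrightarrow> f u \<le> 1"
  using member_le_sum[of u "WW n" f] sumf_one[of f n] finite_WW goodfD(2) by force

lemma del_props:
  assumes g: "goodf f" and u: "u \<in> WW n"
  shows "0 \<le> del f u" "del f u = 0 \<longleftrightarrow> (\<forall>j<m. f (u @ [j]) = f u * wt u j / Wt u)"
proof -
  have F: "f u = (\<Sum>j<m. f (u @ [j]))" using goodfD(3)[OF g u] .
  have cond: "0 \<le> ee (f u) (Wt u) (wt u j) (f (u @ [j])) \<and>
     (ee (f u) (Wt u) (wt u j) (f (u @ [j])) = 0 \<longleftrightarrow> f (u @ [j]) = f u * wt u j / Wt u)" if j: "j < m" for j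
  proof -
    have ge: "f (u @ [j]) \<le> f u" unfolding F using j goodfD(2)[OF g]
      by (intro member_le_sum) auto
    show ?thesis unfolding ee_def
      using gibbs_term[OF Wt_pos[OF u] wt_nonneg[OF u j] goodfD(2)[OF g] ge wt_zero[OF g u j]] by simp
  qed
  show "0 \<le> del f u" unfolding del_def using cond by (intro sum_nonneg) auto
  have "del f u = 0 \<longleftrightarrow> (\<forall>j\<in>{..<m}. ee (f u) (Wt u) (wt u j) (f (u @ [j])) = 0)"
    unfolding del_def using cond by (intro sum_nonneg_eq_0_iff) auto
  also have "\<dots> \<longleftrightarrow> (\<forall>j<m. f (u @ [j]) = f u * wt u j / Wt u)" using cond by auto
  finally show "del f u = 0 \<longleftrightarrow> (\<forall>j<m. f (u @ [j]) = f u * wt u j / Wt u)" .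
qed

lemma del_eq:
  assumes g: "goodf f" and u: "u \<in> WW n"
  shows "del f u = hh (f u) + real q * (f u * cc u) - (\<Sum>j<m. f (u @ [j]) * cc (u @ [j]))
           - (\<Sum>j<m. hh (f (u @ [j])))"
proof -
  have F: "f u = (\<Sum>j<m. f (u @ [j]))" using goodfD(3)[OF g u] .
  have "del f u = (\<Sum>j<m. f u * wt u j / Wt u) - (\<Sum>j<m. f (u @ [j])) - (\<Sum>j<m. f (u @ [j])) * ln (f u)
      - (\<Sum>j<m. f (u @ [j]) * ln (wt u j)) + (\<Sum>j<m. f (u @ [j])) * ln (Wt u) - (\<Sum>j<m. hh (f (u @ [j])))"
    unfolding del_def ee_def by (simp add: sum_subtractf sum.distrib sum_distrib_right)
  also have "(\<Sum>j<m. f u * wt u j / Wt u) = f u"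
    using Wt_sum[OF u] Wt_pos[OF u] by (simp add: sum_divide_distrib[symmetric] sum_distrib_left[symmetric])
  also have "(\<Sum>j<m. f (u @ [j]) * ln (wt u j)) = (\<Sum>j<m. f (u @ [j]) * cc (u @ [j]))"
    using gw[OF g u] by (intro sum.cong) auto
  also have "ln (Wt u) = real q * cc u" by (rule ln_Wt[OF u])
  finally show ?thesis unfolding F[symmetric] by (simp add: hh_def algebra_simps)
qed

lemma dd_eq: assumes g: "goodf f" shows "dd f n = (\<Sum>u\<in>WW n. del f u)"
proof -
  have "(\<Sum>u\<in>WW n. del f u) = aa f n + real q * bb f n - (\<Sum>u\<in>WW n. \<Sum>j<m. f (u @ [j]) * cc (u @ [j]))
      - (\<Sum>u\<in>WW n. \<Sum>j<m. hh (f (u @ [j])))"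
    using del_eq[OF g] unfolding aa_def bb_def
    by (simp add: sum_subtractf sum.distrib sum_distrib_left)
  also have "(\<Sum>u\<in>WW n. \<Sum>j<m. f (u @ [j]) * cc (u @ [j])) = bb f (Suc n)"
    unfolding bb_def by (rule sum_WW_Suc[symmetric])
  also have "(\<Sum>u\<in>WW n. \<Sum>j<m. hh (f (u @ [j]))) = aa f (Suc n)"
    unfolding aa_def by (rule sum_WW_Suc[symmetric])
  finally show ?thesis unfolding dd_def by simp
qed

lemma dd_nonneg: "goodf f \<Longrightarrow> dd f n \<ge> 0"
  using dd_eq del_props(1) by (simp add: sum_nonneg)

definition Cm where "Cm = ln TT / q + (\<Sum>i<m. ln (t i))"

lemma cc_bounds: assumes u: "u \<in> WW n" shows "0 \<le> cc u" "cc u \<le> Cm"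
proof -
  have lt: "0 \<le> ln (t i)" if "i < m" for i using tpos that by force
  have lT: "0 \<le> ln TT / q" using TT_gt1 by simp
  show "0 \<le> cc u" using lt lT last_lt[OF u] by (auto simp: cc_def)
  have s: "0 \<le> (\<Sum>i<m. ln (t i))" using lt by (intro sum_nonneg) auto
  have hh: "ln (t i) \<le> (\<Sum>i<m. ln (t i))" if "i < m" for i
    using lt that by (intro member_le_sum) auto
  show "cc u \<le> Cm"
  proof (cases "u = []")
    case True thus ?thesis using s by (simp add: cc_def Cm_def)
  next
    case False
    have "ln (t (last u)) \<le> (\<Sum>i<m. ln (t i))" using hh[OF last_lt[OF u False]] .
    thus ?thesis using False lT by (simp add: cc_def Cm_def)
  qed
qed

lemma hh_nonneg: "0 \<le> x \<Longrightarrow> x \<le> 1 \<Longrightarrow> 0 \<le> hh x"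
  unfolding hh_def by (cases "x = 0") (auto simp: mult_nonneg_nonpos)

lemma bb_bounds: assumes g: "goodf f" shows "0 \<le> bb f n" "bb f n \<le> Cm"
proof -
  show "0 \<le> bb f n" unfolding bb_def using cc_bounds goodfD(2)[OF g] by (intro sum_nonneg) auto
  have "bb f n \<le> (\<Sum>u\<in>WW n. f u * Cm)" unfolding bb_def
    using cc_bounds goodfD(2)[OF g] by (intro sum_mono mult_left_mono) auto
  also have "\<dots> = Cm" using sumf_one[OF g] by (simp add: sum_distrib_right[symmetric])
  finally show "bb f n \<le> Cm" .
qed

lemma aa_nonneg: "goodf f \<Longrightarrow> 0 \<le> aa f n"
  unfolding aa_def using goodfD(2) f_le1 by (intro sum_nonneg hh_nonneg) auto

lemma aa_0: "goodf f \<Longrightarrow> aa f 0 = 0" by (simp add: aa_def WW_0 goodfD hh_def)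
lemma bb_0: "goodf f \<Longrightarrow> bb f 0 = ln TT / q" by (simp add: bb_def WW_0 goodfD cc_def)

lemma aa_bound: assumes g: "goodf f" shows "aa f n \<le> real q * Cm * real n"
proof (induction n)
  case 0 thus ?case using aa_0[OF g] by simp
next
  case (Suc n)
  have "aa f (Suc n) = aa f n + real q * bb f n - bb f (Suc n) - dd f n" unfolding dd_def by simp
  also have "\<dots> \<le> real q * Cm * real n + real q * Cm"
  proof -
    have "real q * bb f n \<le> real q * Cm" using bb_bounds[OF g, of n] by (intro mult_left_mono) auto
    thus ?thesis using Suc bb_bounds[OF g, of "Suc n"] dd_nonneg[OF g, of n] by linarith
  qed
  finally show ?case by (simp add: algebra_simps)
qed

lemma series_f:
  assumes g: "goodf f"
  shows "(\<lambda>k. aa f (Suc k) / real q ^ (Suc k + 1)) sums ((ln TT / q - DD f) / (real q - 1))"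
    and "summable (\<lambda>n. dd f n / real q ^ Suc n)"
proof -
  define K where "K = real q * Cm + Cm"
  have Cm: "0 \<le> Cm" using cc_bounds(1,2)[of "[]" 0] by (simp add: WW_0)
  have ba: "\<bar>aa f n\<bar> \<le> K * (real n + 1)" for n
  proof -
    have "aa f n \<le> K * (real n + 1)" using aa_bound[OF g, of n] Cm unfolding K_def
      by (smt (verit, best) mult_nonneg_nonneg of_nat_0_le_iff distrib_left mult.commute mult.left_commute mult_cancel_left1)
    thus ?thesis using aa_nonneg[OF g] by simp
  qed
  have bb: "\<bar>bb f n\<bar> \<le> K" for n
  proof -
    have "0 \<le> real q * Cm" using Cm by simp
    thus ?thesis using bb_bounds[OF g, of n] unfolding K_def by linarith
  qed
  have bd: "\<bar>dd f n\<bar> \<le> K * (real n + 1)" for n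
  proof -
    have "dd f n \<le> aa f n + real q * bb f n" unfolding dd_def
      using bb_bounds(1)[OF g, of "Suc n"] aa_nonneg[OF g, of "Suc n"] by simp
    also have "\<dots> \<le> real q * Cm * real n + real q * Cm"
    proof -
      have "real q * bb f n \<le> real q * Cm" using bb_bounds[OF g, of n] by (intro mult_left_mono) auto
      thus ?thesis using aa_bound[OF g, of n] by linarith
    qed
    also have "\<dots> \<le> K * (real n + 1)" unfolding K_def using Cm by (simp add: algebra_simps)
    finally show ?thesis using dd_nonneg[OF g] by simp
  qed
  have Q: "real q \<ge> 2" using q2 by simp
  have rec: "aa f (Suc n) = aa f n + real q * bb f n - bb f (Suc n) - dd f n" for n
    unfolding dd_def by simp
  note sm = series_main[OF Q aa_0[OF g] rec ba bb bd]
  show "(\<lambda>k. aa f (Suc k) / real q ^ (Suc k + 1)) sums ((ln TT / q - DD f) / (real q - 1))"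
    using sm(1) unfolding DD_def bb_0[OF g] .
  show "summable (\<lambda>n. dd f n / real q ^ Suc n)" using sm(2) .
qed

lemma DD_nonneg: "goodf f \<Longrightarrow> DD f \<ge> 0"
  unfolding DD_def using dd_nonneg by (intro suminf_nonneg series_f(2)) auto

lemma DD_zero: assumes g: "goodf f" shows "DD f = 0 \<longleftrightarrow> rec f"
proof -
  have "DD f = 0 \<longleftrightarrow> (\<forall>n. dd f n / real q ^ Suc n = 0)"
    unfolding DD_def using dd_nonneg[OF g] by (intro suminf_eq_zero_iff series_f(2)[OF g]) auto
  also have "\<dots> \<longleftrightarrow> (\<forall>n. dd f n = 0)" using q2 by simp
  also have "\<dots> \<longleftrightarrow> (\<forall>n. \<forall>u\<in>WW n. del f u = 0)"
    using dd_eq[OF g] del_props(1)[OF g] finite_WW by (simp add: sum_nonneg_eq_0_iff)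
  also have "\<dots> \<longleftrightarrow> rec f" unfolding rec_def using del_props(2)[OF g] by auto
  finally show ?thesis .
qed

lemma PP_eq: "i < m \<Longrightarrow> j < m \<Longrightarrow> real (A i j) * t j / t i ^ q = PP i j"
  using A01'[of i j] by (auto simp: PP_def)

lemma rec_mkf: assumes g: "goodf f"
  shows "rec f \<longleftrightarrow> (\<forall>u. u \<noteq> [] \<longrightarrow> set u \<subseteq> {..<m} \<longrightarrow> f u = mkf pp PP u)"
proof
  assume r: "rec f"
  show "\<forall>u. u \<noteq> [] \<longrightarrow> set u \<subseteq> {..<m} \<longrightarrow> f u = mkf pp PP u"
  proof (intro allI)
    fix u show "u \<noteq> [] \<longrightarrow> set u \<subseteq> {..<m} \<longrightarrow> f u = mkf pp PP u"
    proof (induction u rule: rev_induct)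
      case (snoc j v)
      show ?case
      proof (intro impI)
        assume s: "set (v @ [j]) \<subseteq> {..<m}"
        hence v: "v \<in> WW (length v)" and j: "j < m" by (auto simp: WW_def)
        have fr: "f (v @ [j]) = f v * wt v j / Wt v" using r v j unfolding rec_def by blast
        show "f (v @ [j]) = mkf pp PP (v @ [j])"
        proof (cases "v = []")
          case True thus ?thesis using fr goodfD(1)[OF g] by (simp add: wt_def Wt_def mkf_def pp_def)
        next
          case False
          have "f v = mkf pp PP v" using snoc s False by auto
          moreover have e: "PP (last v) j = real (A (last v) j) * t j / t (last v) ^ q"
            using PP_eq[OF last_lt[OF v False] j] by simp
          ultimately show ?thesis using fr False mkf_snoc[OF False]
            by (simp add: wt_def Wt_def e)
        qed
      qed
    qed simp
  qed
next
  assume h: "\<forall>u. u \<noteq> [] \<longrightarrow> set u \<subseteq> {..<m} \<longrightarrow> f u = mkf pp PP u"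
  show "rec f" unfolding rec_def
  proof (intro allI ballI impI)
    fix n u j assume u: "u \<in> WW n" and j: "j < m"
    have sj: "set (u @ [j]) \<subseteq> {..<m}" using u j by (auto simp: WW_def)
    show "f (u @ [j]) = f u * wt u j / Wt u"
    proof (cases "u = []")
      case True thus ?thesis using h sj goodfD(1)[OF g] by (simp add: wt_def Wt_def mkf_def pp_def)
    next
      case False
      have su: "set u \<subseteq> {..<m}" using u by (auto simp: WW_def)
      have e: "PP (last u) j = real (A (last u) j) * t j / t (last u) ^ q"
        using PP_eq[OF last_lt[OF u False] j] by simp
      show ?thesis using h sj su False mkf_snoc[OF False]
        by (simp add: wt_def Wt_def e)
    qed
  qed
qed

end


lemma coord_meas[measurable]: "(\<lambda>x::nat \<Rightarrow> nat. x i) \<in> measurable borel (count_space UNIV)"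
  using measurable_product_coordinates[of i] sets_borel_eq_count_space
  by (metis measurable_cong_sets)

lemma cyl_borel[measurable]: "cyl u \<in> sets borel"
  unfolding cyl_def by measurable

lemma SigmaA_borel[measurable]: "SigmaA m A \<in> sets borel"
  unfolding SigmaA_def by measurable

context mk begin

abbreviation "\<Omega> \<equiv> SigmaA m A"
definition fm :: "(nat \<Rightarrow> nat) measure \<Rightarrow> nat list \<Rightarrow> real" where
  "fm \<mu> u = measure \<mu> (\<Omega> \<inter> cyl u)"

lemma bp_sets: "borel_prob_on \<Omega> \<mu> \<Longrightarrow> X \<in> sets borel \<Longrightarrow> \<Omega> \<inter> X \<in> sets \<mu>"
  unfolding borel_prob_on_def by (auto simp: sets_restrict_space_iff)

lemma bp_space: "borel_prob_on \<Omega> \<mu> \<Longrightarrow> space \<mu> = \<Omega>"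
  unfolding borel_prob_on_def by (metis space_restrict_space2 SigmaA_borel space_borel sets_eq_imp_space_eq)

lemma cyl_split: "u \<in> WW n \<Longrightarrow> \<Omega> \<inter> cyl u = (\<Union>j<m. \<Omega> \<inter> cyl (u @ [j]))"
proof (intro equalityI subsetI)
  fix x assume u: "u \<in> WW n" and x: "x \<in> \<Omega> \<inter> cyl u"
  have "x (length u) < m" using x by (auto simp: SigmaA_def)
  moreover have "x \<in> cyl (u @ [x (length u)])" using x
    by (auto simp: cyl_def nth_append less_Suc_eq)
  ultimately show "x \<in> (\<Union>j<m. \<Omega> \<inter> cyl (u @ [j]))" using x by blast
qed (auto simp: cyl_def nth_append)

lemma cyl_empty: "u \<noteq> [] \<Longrightarrow> A (last u) j \<noteq> 1 \<Longrightarrow> \<Omega> \<inter> cyl (u @ [j]) = {}"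
proof (safe)
  fix x assume u: "u \<noteq> []" and a: "A (last u) j \<noteq> 1" and x: "x \<in> \<Omega>" "x \<in> cyl (u @ [j])"
  obtain k where k: "length u = Suc k" using u by (cases u) auto
  have "x k = last u" using x k u by (auto simp: cyl_def nth_append last_conv_nth)
  moreover have "x (Suc k) = j" using x k by (auto simp: cyl_def nth_append)
  moreover have "A (x k) (x (Suc k)) = 1" using x by (simp add: SigmaA_def)
  ultimately show "x \<in> {}" using a by simp
qed

lemma goodf_fm: assumes bp: "borel_prob_on \<Omega> \<mu>" shows "goodf (fm \<mu>)"
proof -
  interpret prob_space \<mu> using bp unfolding borel_prob_on_def by simp
  have sp: "space \<mu> = \<Omega>" by (rule bp_space[OF bp])
  have 1: "fm \<mu> [] = 1" unfolding fm_def using prob_space sp by (simp add: cyl_def)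
  have 3: "fm \<mu> u = (\<Sum>j<m. fm \<mu> (u @ [j]))" if u: "u \<in> WW n" for u n
  proof -
    have "fm \<mu> u = measure \<mu> (\<Union>j<m. \<Omega> \<inter> cyl (u @ [j]))" unfolding fm_def cyl_split[OF u] ..
    also have "\<dots> = (\<Sum>j<m. measure \<mu> (\<Omega> \<inter> cyl (u @ [j])))"
    proof (rule measure_finite_Union)
      show "(\<lambda>j. \<Omega> \<inter> cyl (u @ [j])) ` {..<m} \<subseteq> sets \<mu>" using bp_sets[OF bp] by auto
      show "disjoint_family_on (\<lambda>j. \<Omega> \<inter> cyl (u @ [j])) {..<m}"
        by (auto simp: disjoint_family_on_def cyl_def nth_append)
    qed (auto simp: emeasure_eq_measure)
    finally show ?thesis unfolding fm_def .
  qed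
  have 4: "fm \<mu> (u @ [j]) = 0" if "u \<noteq> []" "A (last u) j \<noteq> 1" for u j
    unfolding fm_def cyl_empty[OF that] by simp
  show ?thesis unfolding goodf_def using 1 3 4 by (auto simp: fm_def)
qed

lemma alpha_eq: "alpha m \<Omega> k = (\<lambda>u. \<Omega> \<inter> cyl u) ` {u\<in>WW k. \<Omega> \<inter> cyl u \<noteq> {}}"
  unfolding alpha_def WW_def by auto

lemma inj_cyl: "inj_on (\<lambda>u. \<Omega> \<inter> cyl u) {u\<in>WW k. \<Omega> \<inter> cyl u \<noteq> {}}"
proof (rule inj_onI)
  fix u v assume u: "u \<in> {u\<in>WW k. \<Omega> \<inter> cyl u \<noteq> {}}" and v: "v \<in> {u\<in>WW k. \<Omega> \<inter> cyl u \<noteq> {}}"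
    and e: "\<Omega> \<inter> cyl u = \<Omega> \<inter> cyl v"
  obtain x where x: "x \<in> \<Omega> \<inter> cyl u" using u by auto
  have "x \<in> cyl v" using x e by auto
  thus "u = v" using x u v by (intro nth_equalityI) (auto simp: WW_def cyl_def)
qed

lemma Hm_eq: assumes m1: "m > 1" shows "Hm m \<mu> (alpha m \<Omega> k) = aa (fm \<mu>) k / ln (real m)"
proof -
  have "Hm m \<mu> (alpha m \<Omega> k) = - (\<Sum>u\<in>{u\<in>WW k. \<Omega> \<inter> cyl u \<noteq> {}}. fm \<mu> u * log (real m) (fm \<mu> u))"
    unfolding Hm_def alpha_eq by (subst sum.reindex[OF inj_cyl]) (simp add: fm_def)
  also have "(\<Sum>u\<in>{u\<in>WW k. \<Omega> \<inter> cyl u \<noteq> {}}. fm \<mu> u * log (real m) (fm \<mu> u))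
       = (\<Sum>u\<in>WW k. fm \<mu> u * log (real m) (fm \<mu> u))"
    by (rule sum.mono_neutral_left) (auto simp: finite_WW fm_def)
  also have "- \<dots> = aa (fm \<mu>) k / ln (real m)"
    unfolding aa_def hh_def log_def by (simp add: sum_divide_distrib sum_negf[symmetric])
  finally show ?thesis .
qed

lemma s_dim_eq:
  assumes bp: "borel_prob_on \<Omega> \<mu>"
  shows "s_dim m q \<Omega> \<mu> = (real q - 1) * (ln TT / q - DD (fm \<mu>)) / ln (real m)"
proof -
  have m1: "m > 1" using m2 by simp
  have g: "goodf (fm \<mu>)" by (rule goodf_fm[OF bp])
  have "(\<lambda>k. Hm m \<mu> (alpha m \<Omega> (Suc k)) / real q ^ (Suc k + 1))
      = (\<lambda>k. (1 / ln (real m)) * (aa (fm \<mu>) (Suc k) / real q ^ (Suc k + 1)))"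
    using Hm_eq[OF m1] by simp
  moreover have "(\<lambda>k. (1 / ln (real m)) * (aa (fm \<mu>) (Suc k) / real q ^ (Suc k + 1))) sums
      ((1 / ln (real m)) * ((ln TT / q - DD (fm \<mu>)) / (real q - 1)))"
    by (rule sums_mult[OF series_f(1)[OF g]])
  ultimately have S: "(\<Sum>k. Hm m \<mu> (alpha m \<Omega> (Suc k)) / real q ^ (Suc k + 1))
      = (1 / ln (real m)) * ((ln TT / q - DD (fm \<mu>)) / (real q - 1))"
    by (simp only: sums_iff)
  have q1: "real q - 1 \<noteq> 0" using q2 by simp
  show ?thesis unfolding s_dim_def S using q1 by (simp add: power2_eq_square)
qed

end


context mk begin

lemma measure_cyl_union:
  assumes bp: "borel_prob_on \<Omega> \<mu>" and S: "S \<subseteq> WW N"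
  shows "measure \<mu> (\<Union>u\<in>S. \<Omega> \<inter> cyl u) = (\<Sum>u\<in>S. fm \<mu> u)"
proof -
  interpret prob_space \<mu> using bp unfolding borel_prob_on_def by simp
  have fin: "finite S" using S finite_WW finite_subset by blast
  have "measure \<mu> (\<Union>u\<in>S. \<Omega> \<inter> cyl u) = (\<Sum>u\<in>S. measure \<mu> (\<Omega> \<inter> cyl u))"
  proof (rule measure_finite_Union[OF fin])
    show "(\<lambda>u. \<Omega> \<inter> cyl u) ` S \<subseteq> sets \<mu>" using bp_sets[OF bp] by auto
    show "disjoint_family_on (\<lambda>u. \<Omega> \<inter> cyl u) S"
    proof (unfold disjoint_family_on_def, intro ballI impI)
      fix u v assume u: "u \<in> S" and v: "v \<in> S" and ne: "u \<noteq> v"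
      have "length u = N" "length v = N" using u v S by (auto simp: WW_def)
      thus "(\<Omega> \<inter> cyl u) \<inter> (\<Omega> \<inter> cyl v) = {}" using ne
        by (auto simp: cyl_def intro!: nth_equalityI)
    qed
  qed (auto simp: emeasure_eq_measure)
  thus ?thesis unfolding fm_def .
qed

lemma fin_decomp:
  fixes J :: "nat set" and B :: "nat \<Rightarrow> nat set"
  assumes J: "J \<subseteq> {..<N}"
  shows "\<Omega> \<inter> {x. \<forall>i\<in>J. x i \<in> B i} = (\<Union>u\<in>{u\<in>WW N. \<forall>i\<in>J. u ! i \<in> B i}. \<Omega> \<inter> cyl u)"
proof (intro equalityI subsetI)
  fix x assume x: "x \<in> \<Omega> \<inter> {x. \<forall>i\<in>J. x i \<in> B i}"
  define u where "u = map x [0..<N]"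
  have "u \<in> WW N" using x unfolding u_def WW_def SigmaA_def by auto
  moreover have "\<forall>i\<in>J. u ! i \<in> B i" using x J unfolding u_def by auto
  moreover have "x \<in> cyl u" unfolding u_def cyl_def by simp
  ultimately show "x \<in> (\<Union>u\<in>{u\<in>WW N. \<forall>i\<in>J. u ! i \<in> B i}. \<Omega> \<inter> cyl u)" using x by blast
next
  fix x assume "x \<in> (\<Union>u\<in>{u\<in>WW N. \<forall>i\<in>J. u ! i \<in> B i}. \<Omega> \<inter> cyl u)"
  then obtain u where u: "u \<in> WW N" "\<forall>i\<in>J. u ! i \<in> B i" "x \<in> \<Omega>" "x \<in> cyl u" by blast
  have "x i \<in> B i" if "i \<in> J" for i
  proof -
    have "i < length u" using J that u(1) by (auto simp: WW_def)
    thus ?thesis using u that by (auto simp: cyl_def)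
  qed
  thus "x \<in> \<Omega> \<inter> {x. \<forall>i\<in>J. x i \<in> B i}" using u by auto
qed

lemma unique_meas:
  assumes b1: "borel_prob_on \<Omega> \<mu>1" and b2: "borel_prob_on \<Omega> \<mu>2"
    and eq: "\<And>n u. u \<in> WW n \<Longrightarrow> fm \<mu>1 u = fm \<mu>2 u"
  shows "\<mu>1 = \<mu>2"
proof -
  interpret P1: prob_space \<mu>1 using b1 unfolding borel_prob_on_def by simp
  interpret P2: prob_space \<mu>2 using b2 unfolding borel_prob_on_def by simp
  have sp1: "space \<mu>1 = \<Omega>" and sp2: "space \<mu>2 = \<Omega>" using bp_space b1 b2 by auto
  have sets1: "sets \<mu>1 = sets (restrict_space borel \<Omega>)" and sets2: "sets \<mu>2 = sets (restrict_space borel \<Omega>)"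
    using b1 b2 unfolding borel_prob_on_def by auto
  have idm1: "(\<lambda>x. x) \<in> measurable \<mu>1 borel"
    using measurable_restrict_space1[OF measurable_id[of "borel :: (nat\<Rightarrow>nat) measure"], of \<Omega>]
    by (simp add: measurable_cong_sets[OF sets1 refl])
  have idm2: "(\<lambda>x. x) \<in> measurable \<mu>2 borel"
    using measurable_restrict_space1[OF measurable_id[of "borel :: (nat\<Rightarrow>nat) measure"], of \<Omega>]
    by (simp add: measurable_cong_sets[OF sets2 refl])
  define e1 where "e1 = distr \<mu>1 borel (\<lambda>x. x)"
  define e2 where "e2 = distr \<mu>2 borel (\<lambda>x. x)"
  have em1: "emeasure e1 X = emeasure \<mu>1 (X \<inter> \<Omega>)" if "X \<in> sets borel" for X
    unfolding e1_def using emeasure_distr[OF idm1 that] sp1 by simp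
  have em2: "emeasure e2 X = emeasure \<mu>2 (X \<inter> \<Omega>)" if "X \<in> sets borel" for X
    unfolding e2_def using emeasure_distr[OF idm2 that] sp2 by simp
  have PB: "sets (PiM UNIV (\<lambda>_. borel :: nat measure)) = sets (borel :: (nat \<Rightarrow> nat) measure)"
    by (rule sets_PiM_equal_borel)
  have "e1 = e2"
  proof (rule measure_eqI_PiM_infinite[where I=UNIV and M="\<lambda>_. borel :: nat measure"])
    show "sets e1 = sets (PiM UNIV (\<lambda>_. borel :: nat measure))" unfolding e1_def PB by simp
    show "sets e2 = sets (PiM UNIV (\<lambda>_. borel :: nat measure))" unfolding e2_def PB by simp
    show "finite_measure e1" unfolding e1_def by (rule P1.finite_measure_distr[OF idm1])
    fix B :: "nat \<Rightarrow> nat set" and J :: "nat set" assume J: "finite J" and "J \<subseteq> UNIV" and B: "\<And>i. i \<in> J \<Longrightarrow> B i \<in> sets (borel :: nat measure)"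
    obtain N where N: "J \<subseteq> {..<N}" using J finite_nat_bounded by blast
    have pe: "prod_emb UNIV (\<lambda>_. borel :: nat measure) J (Pi\<^sub>E J B) = {x. \<forall>i\<in>J. x i \<in> B i}"
      by (auto simp: prod_emb_def space_PiM)
    have Xb: "{x::nat\<Rightarrow>nat. \<forall>i\<in>J. x i \<in> B i} \<in> sets borel"
    proof -
      have "prod_emb UNIV (\<lambda>_. borel :: nat measure) J (Pi\<^sub>E J B) \<in> sets (PiM UNIV (\<lambda>_. borel :: nat measure))"
        using J B by (intro sets_PiM_I) auto
      thus ?thesis unfolding pe PB .
    qed
    have dec: "{x. \<forall>i\<in>J. x i \<in> B i} \<inter> \<Omega> = (\<Union>u\<in>{u\<in>WW N. \<forall>i\<in>J. u ! i \<in> B i}. \<Omega> \<inter> cyl u)"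
      using fin_decomp[OF N, of B] by blast
    have "emeasure e1 {x. \<forall>i\<in>J. x i \<in> B i} = ennreal (\<Sum>u\<in>{u\<in>WW N. \<forall>i\<in>J. u ! i \<in> B i}. fm \<mu>1 u)"
      unfolding em1[OF Xb] dec P1.emeasure_eq_measure
      by (subst measure_cyl_union[OF b1]) auto
    also have "\<dots> = ennreal (\<Sum>u\<in>{u\<in>WW N. \<forall>i\<in>J. u ! i \<in> B i}. fm \<mu>2 u)"
      using eq by (intro arg_cong[where f=ennreal] sum.cong) auto
    also have "\<dots> = emeasure e2 {x. \<forall>i\<in>J. x i \<in> B i}"
      unfolding em2[OF Xb] dec P2.emeasure_eq_measure
      by (subst measure_cyl_union[OF b2]) auto
    finally show "emeasure e1 (prod_emb UNIV (\<lambda>_. borel) J (Pi\<^sub>E J B)) = emeasure e2 (prod_emb UNIV (\<lambda>_. borel) J (Pi\<^sub>E J B))"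
      unfolding pe .
  qed
  show "\<mu>1 = \<mu>2"
  proof (rule measure_eqI)
    show "sets \<mu>1 = sets \<mu>2" using sets1 sets2 by simp
    fix X assume X: "X \<in> sets \<mu>1"
    have Xs: "X \<subseteq> \<Omega>" "X \<in> sets borel" using X sets1 by (auto simp: sets_restrict_space_iff)
    have "emeasure \<mu>1 X = emeasure e1 X" using em1[OF Xs(2)] Xs(1) by (simp add: Int_absorb2)
    also have "\<dots> = emeasure e2 X" using \<open>e1 = e2\<close> by simp
    also have "\<dots> = emeasure \<mu>2 X" using em2[OF Xs(2)] Xs(1) by (simp add: Int_absorb2)
    finally show "emeasure \<mu>1 X = emeasure \<mu>2 X" .
  qed
qed

end


primrec xpath :: "(nat \<Rightarrow> nat \<Rightarrow> nat) \<Rightarrow> nat \<Rightarrow> nat" where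
  "xpath \<omega> 0 = \<omega> 0 0"
| "xpath \<omega> (Suc n) = \<omega> (Suc n) (xpath \<omega> n)"

lemma xpath_prefix:
  "(\<forall>i<L. xpath \<omega> i = u ! i) \<longleftrightarrow> (\<forall>k<L. (if k = 0 then \<omega> 0 0 = u ! 0 else \<omega> k (u ! (k - 1)) = u ! k))"
proof (induction L)
  case (Suc L)
  have "(\<forall>i<Suc L. xpath \<omega> i = u ! i) \<longleftrightarrow> (\<forall>i<L. xpath \<omega> i = u ! i) \<and> xpath \<omega> L = u ! L"
    by (auto simp: less_Suc_eq)
  also have "\<dots> \<longleftrightarrow> (\<forall>i<L. xpath \<omega> i = u ! i) \<and>
      (if L = 0 then \<omega> 0 0 = u ! 0 else \<omega> L (u ! (L - 1)) = u ! L)"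
  proof (cases L)
    case (Suc L')
    have "(\<forall>i<L. xpath \<omega> i = u ! i) \<Longrightarrow> xpath \<omega> L = \<omega> L (u ! (L - 1))" using Suc by simp
    thus ?thesis using Suc by auto
  qed simp
  also have "\<dots> \<longleftrightarrow> (\<forall>k<Suc L. (if k = 0 then \<omega> 0 0 = u ! 0 else \<omega> k (u ! (k - 1)) = u ! k))"
    using Suc.IH by (auto simp: less_Suc_eq)
  finally show ?case .
qed simp

context mk begin

definition fp0 :: "nat \<Rightarrow> real" where "fp0 i = (if i < m then t i / TT else 0)"
definition frow :: "nat \<Rightarrow> nat \<Rightarrow> real" where "frow i j = (if j < m then PP i j else 0)"
definition p0 :: "nat pmf" where "p0 = embed_pmf fp0"
definition row :: "nat \<Rightarrow> nat pmf" where "row i = embed_pmf (frow i)"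
definition DP :: "nat \<Rightarrow> (nat \<Rightarrow> nat) pmf" where
  "DP k = (if k = 0 then map_pmf (\<lambda>i _. i) p0 else Pi_pmf {..<m} 0 row)"
definition MK :: "nat \<Rightarrow> (nat \<Rightarrow> nat) measure" where
  "MK k = restrict_space (measure_pmf (DP k)) (set_pmf (DP k))"

lemma TT_pos: "TT > 0" using TT_gt1 by simp

lemma PP_nonneg: "i < m \<Longrightarrow> j < m \<Longrightarrow> 0 \<le> PP i j"
  using t_pos[of i] t_pos[of j] by (auto simp: PP_def intro!: divide_nonneg_pos less_imp_le)

lemma tn: "x < m \<Longrightarrow> t x \<noteq> 0" using t_pos by (metis less_irrefl)

lemma pmf_p0: "pmf p0 i = fp0 i"
proof -
  have nn: "\<And>x. 0 \<le> fp0 x" using t_pos TT_pos by (auto simp: fp0_def intro: less_imp_le)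
  have "(\<integral>\<^sup>+x. ennreal (fp0 x) \<partial>count_space UNIV) = (\<Sum>x<m. ennreal (fp0 x))"
    by (rule nn_integral_count_space') (auto simp: fp0_def)
  also have "\<dots> = ennreal (\<Sum>x<m. fp0 x)" using nn by simp
  also have "(\<Sum>x<m. fp0 x) = 1" using TT_pos by (simp add: fp0_def TT_def sum_divide_distrib[symmetric])
  finally show ?thesis unfolding p0_def using nn by (subst pmf_embed_pmf) auto
qed

lemma pmf_row: assumes i: "i < m" shows "pmf (row i) j = frow i j"
proof -
  have nn: "\<And>x. 0 \<le> frow i x" using PP_nonneg[OF i] by (simp add: frow_def)
  have "(\<integral>\<^sup>+x. ennreal (frow i x) \<partial>count_space UNIV) = (\<Sum>x<m. ennreal (frow i x))"
    by (rule nn_integral_count_space') (auto simp: frow_def)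
  also have "\<dots> = ennreal (\<Sum>x<m. frow i x)" using nn by simp
  also have "(\<Sum>x<m. frow i x) = 1"
  proof -
    have "(\<Sum>x<m. frow i x) = (\<Sum>x<m. real (A i x) * t x / t i ^ q)"
      using PP_eq[OF i] by (intro sum.cong) (auto simp: frow_def)
    also have "\<dots> = (\<Sum>x<m. real (A i x) * t x) / t i ^ q" by (simp add: sum_divide_distrib)
    also have "(\<Sum>x<m. real (A i x) * t x) = t i ^ q" using teq i by simp
    also have "t i ^ q / t i ^ q = 1" using tn[OF i] by simp
    finally show ?thesis .
  qed
  finally show ?thesis unfolding row_def using nn by (subst pmf_embed_pmf) auto
qed

lemma set_p0: "set_pmf p0 = {..<m}"
  using tn TT_pos by (auto simp: set_pmf_eq pmf_p0 fp0_def)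

lemma set_row: "i < m \<Longrightarrow> set_pmf (row i) = {j. j < m \<and> A i j = 1}"
  using tn by (auto simp: set_pmf_eq pmf_row frow_def PP_def)

lemma prob_MK: "prob_space (MK k)"
  unfolding MK_def
  by (rule prob_space_restrict_space)
     (auto simp: emeasure_Int_set_pmf[of _ UNIV, simplified] measure_pmf.emeasure_space_1[simplified])

lemma space_MK: "space (MK k) = set_pmf (DP k)"
  by (simp add: MK_def space_restrict_space)

lemma sets_MK: "E \<subseteq> set_pmf (DP k) \<Longrightarrow> E \<in> sets (MK k)"
  unfolding MK_def by (subst sets_restrict_space_iff) auto

lemma PS: "product_prob_space MK"
  unfolding product_prob_space_def product_prob_space_axioms_def product_sigma_finite_def
  using prob_MK prob_space_imp_sigma_finite by blast

lemma space_PS: "\<omega> \<in> space (PiM UNIV MK) \<Longrightarrow> \<omega> k \<in> set_pmf (DP k)"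
  by (auto simp: space_PiM space_MK)

lemma xpath_lt: assumes "\<omega> \<in> space (PiM UNIV MK)" shows "xpath \<omega> n < m"
proof (induction n)
  case 0
  have "\<omega> 0 \<in> (\<lambda>i _. i) ` {..<m}" using space_PS[OF assms, of 0] by (simp add: DP_def set_p0)
  thus ?case by auto
next
  case (Suc n)
  have "\<omega> (Suc n) \<in> PiE_dflt {..<m} 0 (set_pmf \<circ> row)"
    using space_PS[OF assms, of "Suc n"] by (simp add: DP_def set_Pi_pmf)
  hence "\<omega> (Suc n) (xpath \<omega> n) \<in> set_pmf (row (xpath \<omega> n))" using Suc by (auto simp: PiE_dflt_def)
  thus ?case using set_row[OF Suc] by simp
qed

lemma xpath_in: assumes "\<omega> \<in> space (PiM UNIV MK)" shows "xpath \<omega> \<in> \<Omega>"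
proof -
  have "A (xpath \<omega> n) (xpath \<omega> (Suc n)) = 1" for n
  proof -
    have "\<omega> (Suc n) \<in> PiE_dflt {..<m} 0 (set_pmf \<circ> row)"
      using space_PS[OF assms, of "Suc n"] by (simp add: DP_def set_Pi_pmf)
    hence "\<omega> (Suc n) (xpath \<omega> n) \<in> set_pmf (row (xpath \<omega> n))"
      using xpath_lt[OF assms] by (auto simp: PiE_dflt_def)
    thus ?thesis using set_row[OF xpath_lt[OF assms]] by simp
  qed
  thus ?thesis using xpath_lt[OF assms] by (simp add: SigmaA_def)
qed

lemma meas_comp: "(\<lambda>f. f i) \<in> measurable (MK k) (count_space UNIV)"
  unfolding MK_def by (intro measurable_restrict_space1) simp

lemma meas_xpath_n: "(\<lambda>\<omega>. xpath \<omega> n) \<in> measurable (PiM UNIV MK) (count_space UNIV)"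
proof (induction n)
  case 0
  show ?case using measurable_comp[OF measurable_component_singleton[of 0 UNIV MK] meas_comp[of 0 0]]
    by (simp add: comp_def)
next
  case (Suc n)
  have "(\<lambda>\<omega>. \<omega> (Suc n) i) \<in> measurable (PiM UNIV MK) (count_space UNIV)" for i
    using measurable_comp[OF measurable_component_singleton[of "Suc n" UNIV MK] meas_comp[of i "Suc n"]]
    by (simp add: comp_def)
  from measurable_compose_countable[OF this Suc] show ?case by simp
qed

lemma meas_xpath: "xpath \<in> measurable (PiM UNIV MK) (restrict_space borel \<Omega>)"
proof (rule measurable_restrict_space2)
  show "xpath \<in> space (PiM UNIV MK) \<rightarrow> \<Omega>" using xpath_in by auto
  have "(\<lambda>\<omega>. xpath \<omega> n) \<in> borel_measurable (PiM UNIV MK)" for n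
    using meas_xpath_n[of n] sets_borel_eq_count_space by (metis measurable_cong_sets)
  thus "xpath \<in> borel_measurable (PiM UNIV MK)" by (rule measurable_coordinatewise_then_product)
qed

definition mus where "mus = distr (PiM UNIV MK) (restrict_space borel \<Omega>) xpath"

lemma bp_mus: "borel_prob_on \<Omega> mus"
proof -
  interpret PS: product_prob_space MK UNIV by (rule PS)
  show ?thesis unfolding borel_prob_on_def mus_def
    using PS.prob_space_distr[OF meas_xpath] by simp
qed

lemma mprob0: "a < m \<Longrightarrow> measure (MK 0) {f \<in> set_pmf (DP 0). f 0 = a} = pp a"
proof -
  assume a: "a < m"
  have "measure (MK 0) {f \<in> set_pmf (DP 0). f 0 = a} = measure (measure_pmf (DP 0)) ({f. f 0 = a} \<inter> set_pmf (DP 0))"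
    unfolding MK_def by (subst measure_restrict_space) (auto intro: arg_cong[where f="measure _"])
  also have "\<dots> = measure (measure_pmf (DP 0)) {f. f 0 = a}" by (rule measure_Int_set_pmf)
  also have "\<dots> = measure (measure_pmf p0) {a}" by (simp add: DP_def vimage_def)
  also have "\<dots> = pp a" using a by (simp add: measure_pmf_single pmf_p0 fp0_def pp_def)
  finally show ?thesis .
qed

lemma mprobS: "i < m \<Longrightarrow> j < m \<Longrightarrow> measure (MK (Suc k)) {f \<in> set_pmf (DP (Suc k)). f i = j} = PP i j"
proof -
  assume i: "i < m" and j: "j < m"
  have "measure (MK (Suc k)) {f \<in> set_pmf (DP (Suc k)). f i = j} = measure (measure_pmf (DP (Suc k))) ({f. f i = j} \<inter> set_pmf (DP (Suc k)))"
    unfolding MK_def by (subst measure_restrict_space) (auto intro: arg_cong[where f="measure _"])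
  also have "\<dots> = measure (measure_pmf (DP (Suc k))) {f. f i = j}" by (rule measure_Int_set_pmf)
  also have "\<dots> = measure (measure_pmf (map_pmf (\<lambda>f. f i) (DP (Suc k)))) {j}" by (simp add: vimage_def)
  also have "map_pmf (\<lambda>f. f i) (DP (Suc k)) = row i" using i by (simp add: DP_def Pi_pmf_component)
  also have "measure (measure_pmf (row i)) {j} = PP i j" using i j by (simp add: measure_pmf_single pmf_row frow_def)
  finally show ?thesis .
qed

lemma fm_mus: assumes u: "u \<noteq> []" "set u \<subseteq> {..<m}" shows "fm mus u = mkf pp PP u"
proof -
  interpret PS: product_prob_space MK UNIV by (rule PS)
  define L where "L = length u"
  obtain n where n: "L = Suc n" using u unfolding L_def by (cases u) auto
  have ul: "u ! k < m" if "k < L" for k using u that unfolding L_def by (auto dest!: nth_mem)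
  define E where "E k = {f \<in> set_pmf (DP k). if k = 0 then f 0 = u ! 0 else f (u ! (k - 1)) = u ! k}" for k
  have mc: "\<Omega> \<inter> cyl u \<in> sets (restrict_space borel \<Omega>)" by (subst sets_restrict_space_iff) auto
  have "fm mus u = measure (PiM UNIV MK) (xpath -` (\<Omega> \<inter> cyl u) \<inter> space (PiM UNIV MK))"
    unfolding fm_def mus_def by (rule measure_distr[OF meas_xpath mc])
  also have "xpath -` (\<Omega> \<inter> cyl u) \<inter> space (PiM UNIV MK) = prod_emb UNIV MK {..<L} (Pi\<^sub>E {..<L} E)"
  proof (intro equalityI subsetI)
    fix \<omega> assume w: "\<omega> \<in> xpath -` (\<Omega> \<inter> cyl u) \<inter> space (PiM UNIV MK)"
    hence "\<forall>i<L. xpath \<omega> i = u ! i" by (auto simp: cyl_def L_def)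
    hence "\<forall>k<L. (if k = 0 then \<omega> 0 0 = u ! 0 else \<omega> k (u ! (k - 1)) = u ! k)" by (simp add: xpath_prefix)
    hence "\<forall>k<L. \<omega> k \<in> E k" using space_PS[of \<omega>] w by (auto simp: E_def)
    thus "\<omega> \<in> prod_emb UNIV MK {..<L} (Pi\<^sub>E {..<L} E)" using w
      by (auto simp: prod_emb_def space_PiM)
  next
    fix \<omega> assume w: "\<omega> \<in> prod_emb UNIV MK {..<L} (Pi\<^sub>E {..<L} E)"
    hence sp: "\<omega> \<in> space (PiM UNIV MK)" by (auto simp: prod_emb_def space_PiM)
    have "\<forall>k<L. \<omega> k \<in> E k" using w by (auto simp: prod_emb_def)
    hence "\<forall>k<L. (if k = 0 then \<omega> 0 0 = u ! 0 else \<omega> k (u ! (k - 1)) = u ! k)" by (auto simp: E_def)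
    hence "\<forall>i<L. xpath \<omega> i = u ! i" by (simp add: xpath_prefix)
    thus "\<omega> \<in> xpath -` (\<Omega> \<inter> cyl u) \<inter> space (PiM UNIV MK)" using xpath_in[OF sp] sp
      by (auto simp: cyl_def L_def)
  qed
  also have "measure (PiM UNIV MK) (prod_emb UNIV MK {..<L} (Pi\<^sub>E {..<L} E)) = (\<Prod>k<L. measure (MK k) (E k))"
    by (rule PS.measure_PiM_emb) (auto simp: E_def intro!: sets_MK)
  also have "\<dots> = measure (MK 0) (E 0) * (\<Prod>k<n. measure (MK (Suc k)) (E (Suc k)))"
    unfolding n by (rule prod.lessThan_Suc_shift)
  also have "measure (MK 0) (E 0) = pp (u ! 0)" unfolding E_def using mprob0[OF ul[of 0]] n by simp
  also have "(\<Prod>k<n. measure (MK (Suc k)) (E (Suc k))) = (\<Prod>k<n. PP (u ! k) (u ! Suc k))"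
  proof (intro prod.cong refl)
    fix k assume k: "k \<in> {..<n}"
    show "measure (MK (Suc k)) (E (Suc k)) = PP (u ! k) (u ! Suc k)"
      unfolding E_def using mprobS[OF ul[of k] ul[of "Suc k"]] k n by simp
  qed
  finally show ?thesis unfolding mkf_def L_def[symmetric] n by simp
qed

end


theorem corollary2p6:
  fixes m q :: nat and A :: "nat \<Rightarrow> nat \<Rightarrow> nat" and t :: "nat \<Rightarrow> real"
  assumes "m \<ge> 2" and "q \<ge> 2"
    and "\<forall>i<m. \<forall>j<m. A i j \<in> {0, 1}"
    and "primitive m A"
    and "\<forall>i<m. t i > 1"
    and "\<forall>i<m. t i ^ q = (\<Sum>j<m. real (A i j) * t j)"
  shows "(\<exists>!\<mu>. borel_prob_on (SigmaA m A) \<mu> \<and>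
              (\<forall>\<nu>. borel_prob_on (SigmaA m A) \<nu> \<longrightarrow> s_dim m q (SigmaA m A) \<nu> \<le> s_dim m q (SigmaA m A) \<mu>)) \<and>
         (\<forall>\<mu>. borel_prob_on (SigmaA m A) \<mu> \<and>
              (\<forall>\<nu>. borel_prob_on (SigmaA m A) \<nu> \<longrightarrow> s_dim m q (SigmaA m A) \<nu> \<le> s_dim m q (SigmaA m A) \<mu>)
          \<longrightarrow> markov_measure m (SigmaA m A) (\<lambda>i. t i / (\<Sum>k<m. t k))
                (\<lambda>i j. if A i j = 1 then t j / t i ^ q else 0) \<mu>)"
proof -
  interpret mk m q A t using assms by unfold_locales auto
  define L where "L = ln (real m)"
  define X where "X = ln TT / real q"
  have L: "L > 0" using assms(1) unfolding L_def by simp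
  have q1: "real q - 1 > 0" using assms(2) by simp
  define P where "P \<mu> \<longleftrightarrow> borel_prob_on \<Omega> \<mu> \<and> (\<forall>\<nu>. borel_prob_on \<Omega> \<nu> \<longrightarrow> s_dim m q \<Omega> \<nu> \<le> s_dim m q \<Omega> \<mu>)"
    for \<mu>
  have sv: "s_dim m q \<Omega> \<nu> = (real q - 1) * (X - DD (fm \<nu>)) / L" if "borel_prob_on \<Omega> \<nu>" for \<nu>
    using s_dim_eq[OF that] unfolding L_def X_def .
  have le: "s_dim m q \<Omega> \<nu> \<le> (real q - 1) * X / L" if "borel_prob_on \<Omega> \<nu>" for \<nu>
  proof -
    have "0 \<le> DD (fm \<nu>)" by (rule DD_nonneg[OF goodf_fm[OF that]])
    hence "(real q - 1) * (X - DD (fm \<nu>)) \<le> (real q - 1) * X" using q1 by (simp add: mult_left_mono)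
    thus ?thesis unfolding sv[OF that] using L by (simp add: divide_right_mono)
  qed
  have mus_f: "\<forall>u. u \<noteq> [] \<longrightarrow> set u \<subseteq> {..<m} \<longrightarrow> fm mus u = mkf pp PP u" using fm_mus by blast
  have "DD (fm mus) = 0" using rec_mkf[OF goodf_fm[OF bp_mus]] DD_zero[OF goodf_fm[OF bp_mus]] mus_f by blast
  hence smus: "s_dim m q \<Omega> mus = (real q - 1) * X / L" using sv[OF bp_mus] by simp
  have Pmus: "P mus" unfolding P_def using bp_mus le smus by simp
  have form: "\<forall>u. u \<noteq> [] \<longrightarrow> set u \<subseteq> {..<m} \<longrightarrow> fm \<mu> u = mkf pp PP u" if "P \<mu>" for \<mu>
  proof -
    have bp: "borel_prob_on \<Omega> \<mu>" using that P_def by blast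
    have "s_dim m q \<Omega> mus \<le> s_dim m q \<Omega> \<mu>" using that bp_mus unfolding P_def by blast
    hence "(real q - 1) * X / L \<le> (real q - 1) * (X - DD (fm \<mu>)) / L" using smus sv[OF bp] by simp
    hence "(real q - 1) * X \<le> (real q - 1) * (X - DD (fm \<mu>))" using L by (simp add: divide_le_cancel)
    hence "(real q - 1) * DD (fm \<mu>) \<le> 0" by (simp add: algebra_simps)
    hence "DD (fm \<mu>) \<le> 0" using q1 by (simp add: mult_le_0_iff)
    hence "DD (fm \<mu>) = 0" using DD_nonneg[OF goodf_fm[OF bp]] by simp
    thus ?thesis using rec_mkf[OF goodf_fm[OF bp]] DD_zero[OF goodf_fm[OF bp]] by blast
  qed
  have uniq: "\<mu> = mus" if "P \<mu>" for \<mu>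
  proof (rule unique_meas)
    show bp: "borel_prob_on \<Omega> \<mu>" using that P_def by blast
    show "borel_prob_on \<Omega> mus" by (rule bp_mus)
    fix n u assume u: "u \<in> WW n"
    show "fm \<mu> u = fm mus u"
    proof (cases "u = []")
      case True thus ?thesis using goodfD(1)[OF goodf_fm[OF bp]] goodfD(1)[OF goodf_fm[OF bp_mus]] by simp
    next
      case False
      have "set u \<subseteq> {..<m}" using u by (simp add: WW_def)
      thus ?thesis using False form[OF that] mus_f by simp
    qed
  qed
  have pe: "(\<lambda>i. t i / (\<Sum>k<m. t k)) = pp" by (simp add: fun_eq_iff pp_def TT_def)
  have Pe: "(\<lambda>i j. if A i j = 1 then t j / t i ^ q else 0) = PP" by (simp add: fun_eq_iff PP_def)
  have mk: "markov_measure m \<Omega> pp PP \<mu>" if "P \<mu>" for \<mu>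
    unfolding markov_measure_def using that form[OF that] unfolding P_def fm_def mkf_def by simp
  have "\<exists>!\<mu>. P \<mu>" using Pmus uniq by blast
  moreover have "\<forall>\<mu>. P \<mu> \<longrightarrow> markov_measure m \<Omega> (\<lambda>i. t i / (\<Sum>k<m. t k))
                (\<lambda>i j. if A i j = 1 then t j / t i ^ q else 0) \<mu>" unfolding pe Pe using mk by blast
  ultimately show ?thesis unfolding P_def by blast
qed


end
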